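(* Let $(X,d)$ be a metric space, let $k\geq 1$, let $p_1,\dots,p_k\in X$ and put $D=X\setminus\{p_1,\dots,p_k\}$. Define on $D$ $$\hat\tau_D(x,y)=\frac1k\sum_{i=1}^k\log\Big(1+2\frac{d(x,y)}{\sqrt{d(x,p_i)d(y,p_i)}}\Big),\qquad \tilde\tau_D(x,y)=\frac1k\sum_{i=1}^k\log\Big(1+\frac{d(x,y)}{\sqrt{d(x,p_i)d(y,p_i)}}\Big).$$ Then the space $(D,\hat\tau_D)$ is Gromov hyperbolic with $\delta=3\log 3+\log 2$, i.e. for all $x,y,z,v\in D$, $$\hat\tau_D(x,y)+\hat\tau_D(z,v)\leq \max\{\hat\tau_D(x,z)+\hat\tau_D(y,v),\ \hat\tau_D(x,v)+\hat\tau_D(y,z)\}+2\delta.$$ In particular, if $(X,d)$ is Ptolemaic, then the space $(D,\tilde\tau_D)$ is Gromov hyperbolic with $\delta=3\log 3$ (i.e. $\tilde\tau_D$ satisfies the same four-point inequality with $\delta=3\log 3$).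
   Context: A metric space $(X,d)$ is Ptolemaic if $d(x,y)d(z,w)\leq d(x,z)d(y,w)+d(x,w)d(y,z)$ for all $x,y,z,w\in X$. A space $(Y,\rho)$ is Gromov hyperbolic with constant $\delta\ge 0$ if $\rho(x,y)+\rho(z,v)\leq \max\{\rho(x,z)+\rho(y,v),\ \rho(x,v)+\rho(y,z)\}+2\delta$ for all $x,y,z,v\in Y$. *)

theory Defs
  imports "HOL-Analysis.Analysis"
begin

definition ptolemaic :: "'a set \<Rightarrow> ('a \<Rightarrow> 'a \<Rightarrow> real) \<Rightarrow> bool" where
  "ptolemaic X d \<longleftrightarrow> (\<forall>x\<in>X. \<forall>y\<in>X. \<forall>z\<in>X. \<forall>w\<in>X.
      d x y * d z w \<le> d x z * d y w + d x w * d y z)"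

definition gromov_hyperbolic :: "'a set \<Rightarrow> ('a \<Rightarrow> 'a \<Rightarrow> real) \<Rightarrow> real \<Rightarrow> bool" where
  "gromov_hyperbolic Y \<rho> \<delta> \<longleftrightarrow> \<delta> \<ge> 0 \<and> (\<forall>x\<in>Y. \<forall>y\<in>Y. \<forall>z\<in>Y. \<forall>v\<in>Y.
      \<rho> x y + \<rho> z v \<le> max (\<rho> x z + \<rho> y v) (\<rho> x v + \<rho> y z) + 2 * \<delta>)"

definition tau_hat :: "('a \<Rightarrow> 'a \<Rightarrow> real) \<Rightarrow> nat \<Rightarrow> (nat \<Rightarrow> 'a) \<Rightarrow> 'a \<Rightarrow> 'a \<Rightarrow> real" where
  "tau_hat d k p x y = (1 / real k) *
     (\<Sum>i=1..k. ln (1 + 2 * d x y / sqrt (d x (p i) * d y (p i))))"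

definition tau_tilde :: "('a \<Rightarrow> 'a \<Rightarrow> real) \<Rightarrow> nat \<Rightarrow> (nat \<Rightarrow> 'a) \<Rightarrow> 'a \<Rightarrow> 'a \<Rightarrow> real" where
  "tau_tilde d k p x y = (1 / real k) *
     (\<Sum>i=1..k. ln (1 + d x y / sqrt (d x (p i) * d y (p i))))"

end

theory Submission
  imports Defs
begin

lemma qt_real:
  fixes a b g Dxy Dxz Dzy :: real
  assumes "a > 0" "b > 0" "g > 0" "Dxz \<ge> 0" "Dzy \<ge> 0"
    "Dxy \<le> Dxz + Dzy" "g^2 - b^2 \<le> Dzy" "g^2 - a^2 \<le> Dxz"
  shows "1 + Dxy/(a*b) \<le> 2*(1+Dxz/(a*g))*(1+Dzy/(g*b))"
proof -
  have h1: "g*(g-b) \<le> Dzy"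
  proof (cases "g \<ge> b")
    case True
    have "g*(g-b) \<le> (g+b)*(g-b)" using True assms by (intro mult_right_mono) auto
    also have "\<dots> = g^2-b^2" by (simp add: power2_eq_square algebra_simps)
    finally show ?thesis using assms by linarith
  next
    case False then show ?thesis using assms mult_pos_neg[of g "g-b"] by linarith
  qed
  have h2: "g*(g-a) \<le> Dxz"
  proof (cases "g \<ge> a")
    case True
    have "g*(g-a) \<le> (g+a)*(g-a)" using True assms by (intro mult_right_mono) auto
    also have "\<dots> = g^2-a^2" by (simp add: power2_eq_square algebra_simps)
    finally show ?thesis using assms by linarith
  next
    case False then show ?thesis using assms mult_pos_neg[of g "g-a"] by linarith
  qed
  have k1: "Dxz * (g*(g-b)) \<le> Dxz * Dzy" using h1 assms by (intro mult_left_mono) auto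
  have k2: "Dzy * (g*(g-a)) \<le> Dzy * Dxz" using h2 assms by (intro mult_left_mono) auto
  have k3: "Dxy * g^2 \<le> (Dxz + Dzy) * g^2" using assms by (intro mult_right_mono) auto
  have main: "Dxy * g^2 \<le> Dxz*g*b + Dzy*g*a + 2*Dxz*Dzy"
    using k1 k2 k3 by (simp add: algebra_simps power2_eq_square)
  have "Dxy/(a*b) = Dxy*g^2/(a*g*g*b)" using assms by (simp add: field_simps power2_eq_square)
  also have "\<dots> \<le> (Dxz*g*b + Dzy*g*a + 2*Dxz*Dzy)/(a*g*g*b)"
    using main assms by (intro divide_right_mono) auto
  also have "\<dots> = Dxz/(a*g) + Dzy/(g*b) + 2*Dxz*Dzy/(a*g*g*b)"
    using assms by (simp add: field_simps)
  finally have "Dxy/(a*b) \<le> Dxz/(a*g) + Dzy/(g*b) + 2*Dxz*Dzy/(a*g*g*b)" .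
  moreover have "2*Dxz*Dzy/(a*g*g*b) = 2*((Dxz/(a*g))*(Dzy/(g*b)))" by (simp add: field_simps)
  moreover have "Dxz/(a*g) \<ge> 0" "Dzy/(g*b) \<ge> 0" using assms by auto
  moreover have "2*(1+Dxz/(a*g))*(1+Dzy/(g*b)) = 2 + 2*(Dxz/(a*g)) + 2*(Dzy/(g*b)) + 2*((Dxz/(a*g))*(Dzy/(g*b)))"
    by (simp only: algebra_simps)
  ultimately show ?thesis by linarith
qed

lemma ptol4:
  fixes dxy dzv dxz dyv dxv dyz dzy :: real
  assumes "0 \<le> dxz" "0 \<le> dyv" "0 \<le> dxv" "0 \<le> dyz" "0 \<le> dxy" "0\<le>dzv"
   "dxy \<le> dxz + dyz" "dxy \<le> dxv + dyv" "dzv \<le> dxz + dxv" "dzv \<le> dyz + dyv"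
   "dxv * dyz \<le> dxz * dyv"
  shows "dxy * dzv \<le> 4 * (dxz * dyv)"
proof -
  consider "dxz \<le> dyz \<and> dxz \<le> dxv" | "dxv \<le> dyv \<and> dxv \<le> dxz" | "dyz \<le> dxz \<and> dyz \<le> dyv"
    | "dyv \<le> dxv \<and> dyv \<le> dyz" by linarith
  then show ?thesis
  proof cases
    case 1
    have "dxy \<le> 2*dyz" "dzv \<le> 2*dxv" using assms 1 by linarith+
    hence "dxy*dzv \<le> (2*dyz)*(2*dxv)" using assms by (intro mult_mono) auto
    moreover have "(2*dyz)*(2*dxv) = 4*(dxv*dyz)" by simp
    ultimately show ?thesis using assms(11) by linarith
  next
    case 2
    have "dxy \<le> 2*dyv" "dzv \<le> 2*dxz" using assms 2 by linarith+
    hence "dxy*dzv \<le> (2*dyv)*(2*dxz)" using assms by (intro mult_mono) auto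
    moreover have "(2*dyv)*(2*dxz) = 4*(dxz*dyv)" by simp
    ultimately show ?thesis using assms(11) by linarith
  next
    case 3
    have "dxy \<le> 2*dxz" "dzv \<le> 2*dyv" using assms 3 by linarith+
    hence "dxy*dzv \<le> (2*dxz)*(2*dyv)" using assms by (intro mult_mono) auto
    moreover have "(2*dxz)*(2*dyv) = 4*(dxz*dyv)" by simp
    ultimately show ?thesis using assms(11) by linarith
  next
    case 4
    have "dxy \<le> 2*dxv" "dzv \<le> 2*dyz" using assms 4 by linarith+
    hence "dxy*dzv \<le> (2*dxv)*(2*dyz)" using assms by (intro mult_mono) auto
    moreover have "(2*dxv)*(2*dyz) = 4*(dxv*dyz)" by simp
    ultimately show ?thesis using assms(11) by linarith
  qed
qed

lemma combine:
  fixes uxy uzv uxz uyv :: real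
  assumes "uxy \<ge> 0" "uzv \<ge> 0" "uxz \<ge> 0" "uyv \<ge> 0"
   "1+uxy \<le> 4*((1+uxz)*(1+uyv))*(1+uzv)"
   "1+uzv \<le> 4*((1+uxz)*(1+uyv))*(1+uxy)"
   "uxy*uzv \<le> 4*(uxz*uyv)"
  shows "(1+uxy)*(1+uzv) \<le> 16*((1+uxz)*(1+uyv))"
proof -
  define Q where "Q = (1+uxz)*(1+uyv)"
  have Q: "uxz*uyv \<le> Q" "1 \<le> Q" using assms unfolding Q_def by (auto simp: algebra_simps)
  consider "uxy < 1" | "uzv < 1" | "uxy \<ge> 1 \<and> uzv \<ge> 1" by linarith
  then show ?thesis
  proof cases
    case 1
    have "(1+uxy)*(1+uzv) \<le> 2*(1+uzv)" using 1 assms by (intro mult_right_mono) auto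
    also have "\<dots> \<le> 2*(4*Q*(1+uxy))" using mult_left_mono[OF assms(6), of 2] unfolding Q_def by simp
    also have "\<dots> \<le> 2*(4*Q*2)" using 1 Q by (simp add: mult_left_mono)
    finally show ?thesis unfolding Q_def by linarith
  next
    case 2
    have "(1+uxy)*(1+uzv) \<le> (1+uxy)*2" using 2 assms by (intro mult_left_mono) auto
    also have "\<dots> \<le> (4*Q*(1+uzv))*2" using mult_right_mono[OF assms(5), of 2] unfolding Q_def by simp
    also have "\<dots> \<le> (4*Q*2)*2" using 2 Q by (simp add: mult_left_mono)
    finally show ?thesis unfolding Q_def by linarith
  next
    case 3
    have "1+uxy \<le> 2*uxy" "1+uzv \<le> 2*uzv" using 3 by auto
    hence "(1+uxy)*(1+uzv) \<le> (2*uxy)*(2*uzv)" using assms by (intro mult_mono) auto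
    moreover have "(2*uxy)*(2*uzv) = 4*(uxy*uzv)" by simp
    ultimately show ?thesis using assms Q unfolding Q_def by linarith
  qed
qed


definition uu :: "('a \<Rightarrow> 'a \<Rightarrow> real) \<Rightarrow> 'a \<Rightarrow> 'a \<Rightarrow> 'a \<Rightarrow> real" where
  "uu d p x y = d x y / sqrt (d x p * d y p)"

lemma logs_real:
  fixes a b c e :: real
  assumes "a \<ge> 0" "b \<ge> 0" "c \<ge> 0" "e \<ge> 0" "(1+a)*(1+b) \<le> 16*((1+c)*(1+e))"
  shows "ln (1+2*a) + ln (1+2*b) \<le> ln (1+2*c) + ln (1+2*e) + 2*(3*ln 3 + ln 2)"
    "ln (1+a) + ln (1+b) \<le> ln (1+c) + ln (1+e) + 2*(3*ln 3)"
proof -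
  have l1: "2*(3*ln 3 + ln 2) = ln (2916::real)"
  proof -
    have "ln (2916::real) = ln ((3::real)^6 * 2^2)" by simp
    also have "\<dots> = ln ((3::real)^6) + ln ((2::real)^2)" by (rule ln_mult_pos) auto
    also have "\<dots> = 6*ln 3 + 2*ln 2" by (simp only: ln_realpow)
    finally show ?thesis by simp
  qed
  have l2: "2*(3*ln 3) = ln (729::real)"
  proof -
    have "ln (729::real) = ln ((3::real)^6)" by simp
    also have "\<dots> = 6*ln 3" by (simp only: ln_realpow)
    finally show ?thesis by simp
  qed
  have A: "(1+2*a)*(1+2*b) \<le> (2*(1+a))*(2*(1+b))" using assms by (intro mult_mono) auto
  have B: "(1+c)*(1+e) \<le> (1+2*c)*(1+2*e)" using assms by (intro mult_mono) auto
  have "(1+2*a)*(1+2*b) \<le> 2916*((1+2*c)*(1+2*e))"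
  proof -
    have A': "(2*(1+a))*(2*(1+b)) = 4*((1+a)*(1+b))" by (simp only: mult.assoc mult.left_commute)
    have P2: "(1+2*c)*(1+2*e) \<ge> 0" using assms by simp
    show ?thesis using A A' B P2 assms(5) by linarith
  qed
  hence "ln ((1+2*a)*(1+2*b)) \<le> ln (2916*((1+2*c)*(1+2*e)))"
    using assms by (subst ln_le_cancel_iff) auto
  hence "ln (1+2*a) + ln (1+2*b) \<le> ln 2916 + (ln (1+2*c) + ln (1+2*e))"
    using assms by (simp add: ln_mult)
  thus "ln (1+2*a) + ln (1+2*b) \<le> ln (1+2*c) + ln (1+2*e) + 2*(3*ln 3 + ln 2)"
    using l1 by linarith
  have "(1+a)*(1+b) \<le> 729*((1+c)*(1+e))"
  proof -
    have P: "(1+c)*(1+e) \<ge> 0" using assms by simp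
    show ?thesis using P assms(5) by linarith
  qed
  hence "ln ((1+a)*(1+b)) \<le> ln (729*((1+c)*(1+e)))"
    using assms by (subst ln_le_cancel_iff) auto
  hence "ln (1+a) + ln (1+b) \<le> ln 729 + (ln (1+c) + ln (1+e))"
    using assms by (simp add: ln_mult)
  thus "ln (1+a) + ln (1+b) \<le> ln (1+c) + ln (1+e) + 2*(3*ln 3)"
    using l2 by linarith
qed


context Metric_space
begin

lemma uu_sym: "uu d p x y = uu d p y x"
  unfolding uu_def by (simp add: commute mult.commute)

lemma uu_nonneg: "uu d p x y \<ge> 0"
  unfolding uu_def by simp

lemma qt_met:
  assumes "x \<in> M" "y \<in> M" "z \<in> M" "p \<in> M" "x \<noteq> p" "y \<noteq> p" "z \<noteq> p"
  shows "1 + uu d p x y \<le> 2*(1+uu d p x z)*(1+uu d p z y)"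
proof -
  have pos: "d x p > 0" "d y p > 0" "d z p > 0" using assms nonneg zero by (metis less_eq_real_def)+
  define a where "a = sqrt (d x p)"
  define b where "b = sqrt (d y p)"
  define g where "g = sqrt (d z p)"
  have ab: "a > 0" "b > 0" "g > 0" using pos unfolding a_def b_def g_def by auto
  have sq: "a^2 = d x p" "b^2 = d y p" "g^2 = d z p" using pos unfolding a_def b_def g_def by auto
  have u1: "uu d p x y = d x y/(a*b)" unfolding uu_def a_def b_def by (simp add: real_sqrt_mult)
  have u2: "uu d p x z = d x z/(a*g)" unfolding uu_def a_def g_def by (simp add: real_sqrt_mult)
  have u3: "uu d p z y = d z y/(g*b)" unfolding uu_def g_def b_def by (simp add: real_sqrt_mult)
  have t1: "d x y \<le> d x z + d z y" using assms triangle by blast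
  have t2: "g^2 - b^2 \<le> d z y" using sq assms triangle[of z y p] by simp
  have t3: "g^2 - a^2 \<le> d x z" using sq assms triangle[of z x p] commute[of z x] by simp
  show ?thesis unfolding u1 u2 u3 using qt_real[OF ab nonneg nonneg t1 t2 t3] .
qed

lemma prod_met:
  assumes "x \<in> M" "y \<in> M" "z \<in> M" "v \<in> M" "p \<in> M"
    "x \<noteq> p" "y \<noteq> p" "z \<noteq> p" "v \<noteq> p"
    "d x v * d y z \<le> d x z * d y v"
  shows "uu d p x y * uu d p z v \<le> 4*(uu d p x z * uu d p y v)"
proof -
  have pos: "d x p > 0" "d y p > 0" "d z p > 0" "d v p > 0" using assms nonneg zero by (metis less_eq_real_def)+
  define a where "a = sqrt (d x p)"
  define b where "b = sqrt (d y p)"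
  define c where "c = sqrt (d z p)"
  define e where "e = sqrt (d v p)"
  have ab: "a > 0" "b > 0" "c > 0" "e > 0" using pos unfolding a_def b_def c_def e_def by auto
  have "uu d p x y * uu d p z v = (d x y * d z v)/(a*b*c*e)"
    unfolding uu_def a_def b_def c_def e_def by (simp add: real_sqrt_mult mult.assoc)
  also have "\<dots> \<le> (4*(d x z * d y v))/(a*b*c*e)"
  proof (rule divide_right_mono)
    show "d x y * d z v \<le> 4 * (d x z * d y v)"
    proof (rule ptol4)
      show "d x y \<le> d x z + d y z" using triangle[of x z y] assms commute[of z y] by simp
      show "d x y \<le> d x v + d y v" using triangle[of x v y] assms commute[of v y] by simp
      show "d z v \<le> d x z + d x v" using triangle[of z x v] assms commute[of z x] by simp
      show "d z v \<le> d y z + d y v" using triangle[of z y v] assms commute[of z y] by simp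
    qed (use assms in auto)
  qed (use ab in auto)
  also have "\<dots> = 4*(uu d p x z * uu d p y v)"
    unfolding uu_def a_def b_def c_def e_def by (simp add: real_sqrt_mult field_simps)
  finally show ?thesis .
qed

lemma point16:
  assumes "x \<in> M" "y \<in> M" "z \<in> M" "v \<in> M" "p \<in> M"
    "x \<noteq> p" "y \<noteq> p" "z \<noteq> p" "v \<noteq> p"
    "d x v * d y z \<le> d x z * d y v"
  shows "(1+uu d p x y)*(1+uu d p z v) \<le> 16*((1+uu d p x z)*(1+uu d p y v))"
proof (rule combine)
  let ?u = "uu d p"
  have n: "\<And>a b. ?u a b \<ge> 0" by (rule uu_nonneg)
  have q1: "1 + ?u x y \<le> 2*(1+?u x z)*(1+?u z y)" using assms by (intro qt_met) auto
  have q2: "1 + ?u z y \<le> 2*(1+?u z v)*(1+?u v y)" using assms by (intro qt_met) auto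
  have q3: "1 + ?u z v \<le> 2*(1+?u z x)*(1+?u x v)" using assms by (intro qt_met) auto
  have q4: "1 + ?u x v \<le> 2*(1+?u x y)*(1+?u y v)" using assms by (intro qt_met) auto
  have s: "?u v y = ?u y v" "?u z x = ?u x z" by (rule uu_sym)+
  have "2*(1+?u x z)*(1+?u z y) \<le> 2*(1+?u x z)*(2*(1+?u z v)*(1+?u y v))"
    using q2 s n[of x z] by (intro mult_left_mono) auto
  also have "\<dots> = 4*((1+?u x z)*(1+?u y v))*(1+?u z v)" by (simp add: algebra_simps)
  finally show "1 + ?u x y \<le> 4*((1+?u x z)*(1+?u y v))*(1+?u z v)" using q1 by linarith
  have "2*(1+?u z x)*(1+?u x v) \<le> 2*(1+?u x z)*(2*(1+?u x y)*(1+?u y v))"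
    unfolding s(2) using q4 n[of x z] by (intro mult_left_mono) auto
  also have "\<dots> = 4*((1+?u x z)*(1+?u y v))*(1+?u x y)" by (simp add: algebra_simps)
  finally show "1 + ?u z v \<le> 4*((1+?u x z)*(1+?u y v))*(1+?u x y)" using q3 by linarith
  show "?u x y * ?u z v \<le> 4*(?u x z * ?u y v)" using assms by (intro prod_met) auto
qed (auto intro: uu_nonneg)




lemma hat_pt:
  assumes "x \<in> M" "y \<in> M" "z \<in> M" "v \<in> M" "p \<in> M"
    "x \<noteq> p" "y \<noteq> p" "z \<noteq> p" "v \<noteq> p"
    "d x v * d y z \<le> d x z * d y v"
  shows "ln (1 + 2 * d x y / sqrt (d x p * d y p)) + ln (1 + 2 * d z v / sqrt (d z p * d v p))
     \<le> ln (1 + 2 * d x z / sqrt (d x p * d z p)) + ln (1 + 2 * d y v / sqrt (d y p * d v p)) + 2*(3*ln 3 + ln 2)"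
    "ln (1 + d x y / sqrt (d x p * d y p)) + ln (1 + d z v / sqrt (d z p * d v p))
     \<le> ln (1 + d x z / sqrt (d x p * d z p)) + ln (1 + d y v / sqrt (d y p * d v p)) + 2*(3*ln 3)"
proof -
  note h = logs_real[OF uu_nonneg uu_nonneg uu_nonneg uu_nonneg point16[OF assms]]
  show "ln (1 + 2 * d x y / sqrt (d x p * d y p)) + ln (1 + 2 * d z v / sqrt (d z p * d v p))
     \<le> ln (1 + 2 * d x z / sqrt (d x p * d z p)) + ln (1 + 2 * d y v / sqrt (d y p * d v p)) + 2*(3*ln 3 + ln 2)"
    using h(1) unfolding uu_def by (simp only: times_divide_eq_right)
  show "ln (1 + d x y / sqrt (d x p * d y p)) + ln (1 + d z v / sqrt (d z p * d v p))
     \<le> ln (1 + d x z / sqrt (d x p * d z p)) + ln (1 + d y v / sqrt (d y p * d v p)) + 2*(3*ln 3)"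
    using h(2) unfolding uu_def .
qed

end

lemma avg:
  fixes A B C E :: "nat \<Rightarrow> real"
  assumes "k \<ge> 1" "\<forall>i\<in>{1..k}. A i + B i \<le> C i + E i + L"
  shows "(1/real k)*(\<Sum>i=1..k. A i) + (1/real k)*(\<Sum>i=1..k. B i)
    \<le> (1/real k)*(\<Sum>i=1..k. C i) + (1/real k)*(\<Sum>i=1..k. E i) + L"
proof -
  have "(\<Sum>i=1..k. A i + B i) \<le> (\<Sum>i=1..k. C i + E i + L)" using assms(2) by (intro sum_mono) auto
  hence "(\<Sum>i=1..k. A i) + (\<Sum>i=1..k. B i) \<le> (\<Sum>i=1..k. C i) + (\<Sum>i=1..k. E i) + real k * L"
    by (simp add: sum.distrib)
  hence "(1/real k)*((\<Sum>i=1..k. A i) + (\<Sum>i=1..k. B i)) \<le> (1/real k)*((\<Sum>i=1..k. C i) + (\<Sum>i=1..k. E i) + real k * L)"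
    by (intro mult_left_mono) auto
  thus ?thesis using assms(1) by (simp add: algebra_simps)
qed

lemma gh_from_pt:
  fixes F :: "nat \<Rightarrow> 'a \<Rightarrow> 'a \<Rightarrow> real" and d :: "'a \<Rightarrow> 'a \<Rightarrow> real"
  assumes "k \<ge> 1" "\<delta> \<ge> 0"
    and sym: "\<And>i x y. F i x y = F i y x"
    and pt: "\<And>x y z v. x \<in> D \<Longrightarrow> y \<in> D \<Longrightarrow> z \<in> D \<Longrightarrow> v \<in> D \<Longrightarrow>
        d x v * d y z \<le> d x z * d y v \<Longrightarrow> \<forall>i\<in>{1..k}. F i x y + F i z v \<le> F i x z + F i y v + 2*\<delta>"
  shows "gromov_hyperbolic D (\<lambda>x y. (1/real k)*(\<Sum>i=1..k. F i x y)) \<delta>"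
  unfolding gromov_hyperbolic_def
proof (intro conjI ballI)
  show "\<delta> \<ge> 0" by fact
  fix x y z v assume D: "x \<in> D" "y \<in> D" "z \<in> D" "v \<in> D"
  let ?t = "\<lambda>x y. (1/real k)*(\<Sum>i=1..k. F i x y)"
  show "?t x y + ?t z v \<le> max (?t x z + ?t y v) (?t x v + ?t y z) + 2*\<delta>"
  proof (cases "d x v * d y z \<le> d x z * d y v")
    case True
    have "?t x y + ?t z v \<le> ?t x z + ?t y v + 2*\<delta>"
      using avg[OF assms(1) pt[OF D True]] by simp
    thus ?thesis by linarith
  next
    case False
    hence "d x z * d y v \<le> d x v * d y z" by linarith
    from pt[OF D(1,2,4,3) this] have "\<forall>i\<in>{1..k}. F i x y + F i z v \<le> F i x v + F i y z + 2*\<delta>"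
      using sym by metis
    from avg[OF assms(1) this] have "?t x y + ?t z v \<le> ?t x v + ?t y z + 2*\<delta>" by simp
    thus ?thesis by linarith
  qed
qed

theorem theorem4p2:
  fixes X :: "'a set" and d :: "'a \<Rightarrow> 'a \<Rightarrow> real" and k :: nat and p :: "nat \<Rightarrow> 'a"
  assumes "Metric_space X d"
    and "k \<ge> 1"
    and "\<forall>i\<in>{1..k}. p i \<in> X"
  shows "gromov_hyperbolic (X - p ` {1..k}) (tau_hat d k p) (3 * ln 3 + ln 2)
    \<and> (ptolemaic X d \<longrightarrow> gromov_hyperbolic (X - p ` {1..k}) (tau_tilde d k p) (3 * ln 3))"
proof -
  interpret Metric_space X d by fact
  have ln3: "ln (3::real) \<ge> 0" "ln (2::real) \<ge> 0" by auto
  have memD: "w \<in> X" "\<And>i. i \<in> {1..k} \<Longrightarrow> w \<noteq> p i" if "w \<in> X - p ` {1..k}" for w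
    using that by auto
  have h1: "gromov_hyperbolic (X - p ` {1..k}) (tau_hat d k p) (3 * ln 3 + ln 2)"
  proof -
    have e: "tau_hat d k p = (\<lambda>x y. (1/real k)*(\<Sum>i=1..k. ln (1 + 2 * d x y / sqrt (d x (p i) * d y (p i)))))"
      by (intro ext) (simp add: tau_hat_def)
    show ?thesis unfolding e
    proof (rule gh_from_pt[where d = d])
      show "\<And>i x y. ln (1 + 2 * d x y / sqrt (d x (p i) * d y (p i))) = ln (1 + 2 * d y x / sqrt (d y (p i) * d x (p i)))"
        by (simp add: commute mult.commute)
    next
      fix x y z v assume D: "x \<in> X - p ` {1..k}" "y \<in> X - p ` {1..k}" "z \<in> X - p ` {1..k}" "v \<in> X - p ` {1..k}"
        and c: "d x v * d y z \<le> d x z * d y v"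
      show "\<forall>i\<in>{1..k}. ln (1 + 2 * d x y / sqrt (d x (p i) * d y (p i))) + ln (1 + 2 * d z v / sqrt (d z (p i) * d v (p i))) \<le> ln (1 + 2 * d x z / sqrt (d x (p i) * d z (p i))) + ln (1 + 2 * d y v / sqrt (d y (p i) * d v (p i))) + 2*(3*ln 3 + ln 2)"
      proof
        fix i assume i: "i \<in> {1..k}"
        show "ln (1 + 2 * d x y / sqrt (d x (p i) * d y (p i))) + ln (1 + 2 * d z v / sqrt (d z (p i) * d v (p i))) \<le> ln (1 + 2 * d x z / sqrt (d x (p i) * d z (p i))) + ln (1 + 2 * d y v / sqrt (d y (p i) * d v (p i))) + 2*(3*ln 3 + ln 2)" by (rule hat_pt(1)[OF memD(1)[OF D(1)] memD(1)[OF D(2)] memD(1)[OF D(3)] memD(1)[OF D(4)]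
           assms(3)[rule_format, OF i] memD(2)[OF D(1) i] memD(2)[OF D(2) i] memD(2)[OF D(3) i] memD(2)[OF D(4) i] c])
      qed
    qed (use assms ln3 in auto)
  qed
  have h2: "gromov_hyperbolic (X - p ` {1..k}) (tau_tilde d k p) (3 * ln 3)"
  proof -
    have e: "tau_tilde d k p = (\<lambda>x y. (1/real k)*(\<Sum>i=1..k. ln (1 + d x y / sqrt (d x (p i) * d y (p i)))))"
      by (intro ext) (simp add: tau_tilde_def)
    show ?thesis unfolding e
    proof (rule gh_from_pt[where d = d])
      show "\<And>i x y. ln (1 + d x y / sqrt (d x (p i) * d y (p i))) = ln (1 + d y x / sqrt (d y (p i) * d x (p i)))"
        by (simp add: commute mult.commute)
    next
      fix x y z v assume D: "x \<in> X - p ` {1..k}" "y \<in> X - p ` {1..k}" "z \<in> X - p ` {1..k}" "v \<in> X - p ` {1..k}"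
        and c: "d x v * d y z \<le> d x z * d y v"
      show "\<forall>i\<in>{1..k}. ln (1 + d x y / sqrt (d x (p i) * d y (p i))) + ln (1 + d z v / sqrt (d z (p i) * d v (p i))) \<le> ln (1 + d x z / sqrt (d x (p i) * d z (p i))) + ln (1 + d y v / sqrt (d y (p i) * d v (p i))) + 2*(3*ln 3)"
      proof
        fix i assume i: "i \<in> {1..k}"
        show "ln (1 + d x y / sqrt (d x (p i) * d y (p i))) + ln (1 + d z v / sqrt (d z (p i) * d v (p i))) \<le> ln (1 + d x z / sqrt (d x (p i) * d z (p i))) + ln (1 + d y v / sqrt (d y (p i) * d v (p i))) + 2*(3*ln 3)" by (rule hat_pt(2)[OF memD(1)[OF D(1)] memD(1)[OF D(2)] memD(1)[OF D(3)] memD(1)[OF D(4)]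
           assms(3)[rule_format, OF i] memD(2)[OF D(1) i] memD(2)[OF D(2) i] memD(2)[OF D(3) i] memD(2)[OF D(4) i] c])
      qed
    qed (use assms ln3 in auto)
  qed
  show ?thesis using h1 h2 by blast
qed

end
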